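(* Let $M$ be a finite set of items and $\preceq$ a monotone preference over $2^M$. If $\preceq$ satisfies satiation-only-at-the-top (in particular, if it satisfies non-satiation), then $\preceq$ can be represented by a submodular valuation. Consequently, the class of monotone preferences representable by a submodular valuation equals the class of monotone preferences satisfying satiation-only-at-the-top.
   Context: A monotone preference $\preceq$ is a complete and transitive weak order on $2^M$ with $S\preceq T$ whenever $S\subseteq T$; $S\prec T$ means $S\preceq T$ and not $T\preceq S$, and $S=T$ in preference means both $S\preceq T$ and $T\preceq S$. $\preceq$ satisfies non-satiation if $T\prec T\cup\{j\}$ for every $T$ and $j\notin T$. It satisfies satiation-only-at-the-top if for all sets $T\subset S$ and every item $j\notin S$: if $T$ and $T\cup\{j\}$ are indifferent, then $S$ and $S\cup\{j\}$ are indifferent. A valuation $v:2^M\to\mathbb R_{\ge0}$ with $v(\emptyset)=0$ represents $\preceq$ if $S\preceq T\iff v(S)\le v(T)$ and $S\prec T\iff v(S)<v(T)$; $v$ is submodular if $v(S)+v(T)\ge v(S\cup T)+v(S\cap T)$ for all $S,T$. *)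

theory Defs
  imports Complex_Main
begin

text \<open>A preference on the subsets of the item set M is a binary relation
  pref S T meaning "S is weakly worse than T", considered on Pow M.\<close>

definition strict_pref :: "('a set \<Rightarrow> 'a set \<Rightarrow> bool) \<Rightarrow> 'a set \<Rightarrow> 'a set \<Rightarrow> bool" where
  "strict_pref pref S T \<longleftrightarrow> pref S T \<and> \<not> pref T S"

definition indiff :: "('a set \<Rightarrow> 'a set \<Rightarrow> bool) \<Rightarrow> 'a set \<Rightarrow> 'a set \<Rightarrow> bool" where
  "indiff pref S T \<longleftrightarrow> pref S T \<and> pref T S"

definition monotone_pref :: "'a set \<Rightarrow> ('a set \<Rightarrow> 'a set \<Rightarrow> bool) \<Rightarrow> bool" where
  "monotone_pref M pref \<longleftrightarrow>
     (\<forall>S\<subseteq>M. \<forall>T\<subseteq>M. pref S T \<or> pref T S) \<and>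
     (\<forall>S\<subseteq>M. \<forall>T\<subseteq>M. \<forall>U\<subseteq>M. pref S T \<longrightarrow> pref T U \<longrightarrow> pref S U) \<and>
     (\<forall>S T. S \<subseteq> T \<longrightarrow> T \<subseteq> M \<longrightarrow> pref S T)"

definition non_satiation :: "'a set \<Rightarrow> ('a set \<Rightarrow> 'a set \<Rightarrow> bool) \<Rightarrow> bool" where
  "non_satiation M pref \<longleftrightarrow>
     (\<forall>T\<subseteq>M. \<forall>j\<in>M - T. strict_pref pref T (insert j T))"

definition satiation_only_at_top :: "'a set \<Rightarrow> ('a set \<Rightarrow> 'a set \<Rightarrow> bool) \<Rightarrow> bool" where
  "satiation_only_at_top M pref \<longleftrightarrow>
     (\<forall>S\<subseteq>M. \<forall>T. T \<subset> S \<longrightarrow> (\<forall>j\<in>M - S.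
        indiff pref T (insert j T) \<longrightarrow> indiff pref S (insert j S)))"

definition represents :: "'a set \<Rightarrow> ('a set \<Rightarrow> real) \<Rightarrow> ('a set \<Rightarrow> 'a set \<Rightarrow> bool) \<Rightarrow> bool" where
  "represents M v pref \<longleftrightarrow>
     v {} = 0 \<and> (\<forall>S\<subseteq>M. v S \<ge> 0) \<and>
     (\<forall>S\<subseteq>M. \<forall>T\<subseteq>M. (pref S T \<longleftrightarrow> v S \<le> v T) \<and> (strict_pref pref S T \<longleftrightarrow> v S < v T))"

definition submodular_on :: "'a set \<Rightarrow> ('a set \<Rightarrow> real) \<Rightarrow> bool" where
  "submodular_on M v \<longleftrightarrow>
     (\<forall>S\<subseteq>M. \<forall>T\<subseteq>M. v S + v T \<ge> v (S \<union> T) + v (S \<inter> T))"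

end

theory Submission
  imports Defs
begin

lemma chain_lemma:
  assumes mp: "monotone_pref M pref" and soat: "satiation_only_at_top M pref"
    and fD: "finite D"
  shows "D \<subseteq> M \<Longrightarrow> A \<subset> B \<Longrightarrow> B \<subseteq> M \<Longrightarrow> D \<inter> B = {} \<Longrightarrow>
         indiff pref A (A \<union> D) \<Longrightarrow> indiff pref B (B \<union> D)"
  using fD
proof (induction D rule: finite_induct)
  case empty
  have "pref B B" using mp unfolding monotone_pref_def using empty by blast
  then show ?case unfolding indiff_def by simp
next
  case (insert j D)
  have tr: "\<And>X Y Z. X \<subseteq> M \<Longrightarrow> Y \<subseteq> M \<Longrightarrow> Z \<subseteq> M \<Longrightarrow> pref X Y \<Longrightarrow> pref Y Z \<Longrightarrow> pref X Z"
    using mp unfolding monotone_pref_def by blast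
  have mo: "\<And>X Y. X \<subseteq> Y \<Longrightarrow> Y \<subseteq> M \<Longrightarrow> pref X Y"
    using mp unfolding monotone_pref_def by blast
  have AM: "A \<subseteq> M" using insert by blast
  have jM: "j \<in> M" using insert by blast
  have DM: "D \<subseteq> M" using insert by blast
  have i1: "pref A (A \<union> D)" by (rule mo) (use AM DM in auto)
  have i2: "pref (A \<union> D) (insert j (A \<union> D))" by (rule mo) (use AM DM jM in auto)
  have bk: "pref (A \<union> insert j D) A" using insert.prems(5) unfolding indiff_def by blast
  have e: "A \<union> insert j D = insert j (A \<union> D)" by blast
  have ADM: "A \<union> D \<subseteq> M" "insert j (A \<union> D) \<subseteq> M" using AM DM jM by auto
  have "pref (A \<union> D) A"
    using tr[OF ADM(1) ADM(2) AM i2] bk unfolding e .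
  hence indA: "indiff pref A (A \<union> D)" using i1 unfolding indiff_def by blast
  have "pref (insert j (A \<union> D)) (A \<union> D)"
    using tr[OF ADM(2) AM ADM(1) _ i1] bk unfolding e .
  hence indj: "indiff pref (A \<union> D) (insert j (A \<union> D))" using i2 unfolding indiff_def by blast
  have IH: "indiff pref B (B \<union> D)" using insert.IH[OF DM insert.prems(2,3) _ indA] insert.prems(4) by blast
  have ps: "A \<union> D \<subset> B \<union> D" using insert.prems(2,4) by blast
  have BDM: "B \<union> D \<subseteq> M" using insert DM by blast
  have jn: "j \<in> M - (B \<union> D)" using insert jM by blast
  have indB: "indiff pref (B \<union> D) (insert j (B \<union> D))"
    using soat unfolding satiation_only_at_top_def using ps BDM jn indj by blast
  have e2: "B \<union> insert j D = insert j (B \<union> D)" by blast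
  have BM: "B \<subseteq> M" using insert by blast
  have BDjM: "insert j (B \<union> D) \<subseteq> M" using BDM jM by auto
  have "pref (insert j (B \<union> D)) B"
    using tr[OF BDjM BDM BM] indB IH unfolding indiff_def by blast
  moreover have "pref B (insert j (B \<union> D))" by (rule mo) (use BDjM in auto)
  ultimately show ?case unfolding indiff_def e2 by blast
qed

lemma half_pow_ineq:
  fixes a b c d :: nat
  assumes "d < a" "a \<le> b"
  shows "(1/2::real)^a + (1/2)^b \<le> (1/2)^c + (1/2)^d"
proof -
  have "(1/2::real)^(a-1) \<le> (1/2)^d" by (rule power_decreasing) (use assms in auto)
  moreover have "(1/2::real)^a = (1/2)^(a-1) / 2"
    using assms by (cases a) auto
  moreover have "(1/2::real)^b \<le> (1/2)^a" by (rule power_decreasing) (use assms in auto)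
  moreover have "(0::real) \<le> (1/2)^c" by simp
  ultimately show ?thesis by linarith
qed

theorem mainTheorem9:
  fixes M :: "'a set" and pref :: "'a set \<Rightarrow> 'a set \<Rightarrow> bool"
  assumes "finite M" and "monotone_pref M pref"
  shows "(satiation_only_at_top M pref \<longrightarrow> (\<exists>v. represents M v pref \<and> submodular_on M v))
       \<and> (non_satiation M pref \<longrightarrow> (\<exists>v. represents M v pref \<and> submodular_on M v))
       \<and> ((\<exists>v. represents M v pref \<and> submodular_on M v) \<longleftrightarrow> satiation_only_at_top M pref)"
proof -
  note m = assms(2)[unfolded monotone_pref_def]
  have tot: "\<And>X Y. X \<subseteq> M \<Longrightarrow> Y \<subseteq> M \<Longrightarrow> pref X Y \<or> pref Y X" using m[THEN conjunct1] by blast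
  have tr: "\<And>X Y Z. X \<subseteq> M \<Longrightarrow> Y \<subseteq> M \<Longrightarrow> Z \<subseteq> M \<Longrightarrow> pref X Y \<Longrightarrow> pref Y Z \<Longrightarrow> pref X Z" using m[THEN conjunct2, THEN conjunct1] by blast
  have mo: "\<And>X Y. X \<subseteq> Y \<Longrightarrow> Y \<subseteq> M \<Longrightarrow> pref X Y" using m[THEN conjunct2, THEN conjunct2] by blast
  have A: "satiation_only_at_top M pref \<Longrightarrow> \<exists>v. represents M v pref \<and> submodular_on M v"
  proof -
    assume soat: "satiation_only_at_top M pref"
    define r where "r S = card {U. U \<subseteq> M \<and> strict_pref pref U S}" for S
    define v where "v S = 1 - (1/2::real)^(r S)" for S
    have fin: "finite {U. U \<subseteq> M \<and> strict_pref pref U S}" for S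
    proof (rule finite_subset)
      show "{U. U \<subseteq> M \<and> strict_pref pref U S} \<subseteq> Pow M" by auto
      show "finite (Pow M)" using assms(1) by simp
    qed
    have r1: "r S \<le> r T" if "S \<subseteq> M" "T \<subseteq> M" "pref S T" for S T
    proof -
      have "{U. U \<subseteq> M \<and> strict_pref pref U S} \<subseteq> {U. U \<subseteq> M \<and> strict_pref pref U T}"
      proof (rule subsetI)
        fix U assume "U \<in> {U. U \<subseteq> M \<and> strict_pref pref U S}"
        hence U: "U \<subseteq> M" "pref U S" "\<not> pref S U" unfolding strict_pref_def by auto
        have "pref U T" using tr[OF U(1) that(1) that(2) U(2) that(3)] .
        moreover have "\<not> pref T U" using tr[OF that(1) that(2) U(1) that(3)] U(3) by blast
        ultimately show "U \<in> {U. U \<subseteq> M \<and> strict_pref pref U T}" using U(1) unfolding strict_pref_def by blast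
      qed
      thus ?thesis unfolding r_def by (rule card_mono[OF fin])
    qed
    have r2: "r S < r T" if "S \<subseteq> M" "T \<subseteq> M" "strict_pref pref S T" for S T
    proof -
      have "{U. U \<subseteq> M \<and> strict_pref pref U S} \<subseteq> {U. U \<subseteq> M \<and> strict_pref pref U T}"
      proof (rule subsetI)
        fix U assume "U \<in> {U. U \<subseteq> M \<and> strict_pref pref U S}"
        hence U: "U \<subseteq> M" "pref U S" "\<not> pref S U" unfolding strict_pref_def by auto
        have ST: "pref S T" "\<not> pref T S" using that(3) unfolding strict_pref_def by auto
        have "pref U T" using tr[OF U(1) that(1) that(2) U(2) ST(1)] .
        moreover have "\<not> pref T U" using tr[OF that(1) that(2) U(1) ST(1)] U(3) by blast
        ultimately show "U \<in> {U. U \<subseteq> M \<and> strict_pref pref U T}" using U(1) unfolding strict_pref_def by blast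
      qed
      moreover have "S \<in> {U. U \<subseteq> M \<and> strict_pref pref U T}" "S \<notin> {U. U \<subseteq> M \<and> strict_pref pref U S}"
        using that unfolding strict_pref_def by auto
      ultimately have "{U. U \<subseteq> M \<and> strict_pref pref U S} \<subset> {U. U \<subseteq> M \<and> strict_pref pref U T}"
        by blast
      thus ?thesis unfolding r_def by (rule psubset_card_mono[OF fin])
    qed
    have rle: "pref S T \<longleftrightarrow> r S \<le> r T" if "S \<subseteq> M" "T \<subseteq> M" for S T
    proof
      assume "pref S T" thus "r S \<le> r T" using r1[OF that] by blast
    next
      assume h: "r S \<le> r T"
      show "pref S T"
      proof (rule ccontr)
        assume n: "\<not> pref S T"
        hence "strict_pref pref T S" using tot[OF that] unfolding strict_pref_def by blast
        thus False using r2[OF that(2,1)] h by simp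
      qed
    qed
    have rlt: "strict_pref pref S T \<longleftrightarrow> r S < r T" if "S \<subseteq> M" "T \<subseteq> M" for S T
    proof
      assume "strict_pref pref S T" thus "r S < r T" using r2[OF that] by blast
    next
      assume h: "r S < r T"
      hence "\<not> pref T S" using rle[OF that(2,1)] by simp
      thus "strict_pref pref S T" using tot[OF that] unfolding strict_pref_def by blast
    qed
    have vle: "v S \<le> v T \<longleftrightarrow> r S \<le> r T" for S T
      unfolding v_def by (simp add: power_decreasing_iff)
    have vlt: "v S < v T \<longleftrightarrow> r S < r T" for S T
      unfolding v_def by (simp add: power_strict_decreasing_iff)
    have r0: "r {} = 0"
    proof -
      have "{U. U \<subseteq> M \<and> strict_pref pref U {}} = {}"
        using mo unfolding strict_pref_def by blast
      thus ?thesis unfolding r_def by (simp only: card.empty)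
    qed
    have rep: "represents M v pref"
      unfolding represents_def
    proof (intro conjI allI impI)
      show "v {} = 0" unfolding v_def r0 by simp
      fix S assume "S \<subseteq> M"
      show "0 \<le> v S" unfolding v_def by (simp add: power_le_one)
    next
      fix S T assume "S \<subseteq> M" "T \<subseteq> M"
      thus "pref S T = (v S \<le> v T)" "strict_pref pref S T = (v S < v T)"
        using rle rlt vle vlt by auto
    qed
    have key: "v (S \<union> T) + v (S \<inter> T) \<le> v S + v T"
      if SM: "S \<subseteq> M" and TM: "T \<subseteq> M" and ab: "r S \<le> r T" for S T
    proof -
      have STM: "S \<union> T \<subseteq> M" "S \<inter> T \<subseteq> M" using SM TM by auto
      have da: "r (S \<inter> T) \<le> r S" using r1 mo STM SM by (meson Int_lower1)
      have bc: "r T \<le> r (S \<union> T)" using r1 mo STM TM by (meson Un_upper2)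
      show ?thesis
      proof (cases "r (S \<union> T) = r T")
        case True
        have "v (S \<union> T) = v T" unfolding v_def using True by simp
        moreover have "v (S \<inter> T) \<le> v S" using vle da by blast
        ultimately show ?thesis by linarith
      next
        case False
        hence cb: "r T < r (S \<union> T)" using bc by simp
        have "r (S \<inter> T) < r S"
        proof (rule ccontr)
          assume "\<not> r (S \<inter> T) < r S"
          hence eq: "r (S \<inter> T) = r S" using da by simp
          show False
          proof (cases "T \<subseteq> S")
            case True
            hence "S \<union> T = S" by blast
            thus False using cb ab by simp
          next
            case False
            have ind: "indiff pref (S \<inter> T) ((S \<inter> T) \<union> (S - T))"
              using eq rle STM SM unfolding indiff_def
              by (metis Int_Diff_Un order_refl)
            have "indiff pref T (T \<union> (S - T))"
              using chain_lemma[OF assms(2) soat, of "S - T" "S \<inter> T" T] ind False SM TM assms(1)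
              by (simp add: finite_subset Diff_subset order_trans) blast
            moreover have "T \<union> (S - T) = S \<union> T" by blast
            ultimately show False using rle TM STM cb unfolding indiff_def by auto
          qed
        qed
        hence "(1/2::real)^(r S) + (1/2)^(r T) \<le> (1/2)^(r (S \<union> T)) + (1/2)^(r (S \<inter> T))"
          using half_pow_ineq ab by blast
        thus ?thesis unfolding v_def by linarith
      qed
    qed
    have "submodular_on M v"
      unfolding submodular_on_def
    proof (intro allI impI)
      fix S T assume "S \<subseteq> M" "T \<subseteq> M"
      thus "v (S \<union> T) + v (S \<inter> T) \<le> v S + v T"
        using key[of S T] key[of T S] by (cases "r S \<le> r T") (auto simp: Un_commute Int_commute)
    qed
    thus ?thesis using rep by blast
  qed
  have B: "satiation_only_at_top M pref" if ns: "non_satiation M pref"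
    unfolding satiation_only_at_top_def
  proof (intro allI impI ballI)
    fix S T j assume SM: "S \<subseteq> M" and TS: "T \<subset> S" and j: "j \<in> M - S"
      and ind: "indiff pref T (insert j T)"
    have "T \<subseteq> M" "j \<in> M - T" using SM TS j by auto
    hence "strict_pref pref T (insert j T)" using ns unfolding non_satiation_def by blast
    thus "indiff pref S (insert j S)" using ind unfolding strict_pref_def indiff_def by blast
  qed
  have C: "satiation_only_at_top M pref" if "represents M v pref" "submodular_on M v" for v
    unfolding satiation_only_at_top_def
  proof (intro allI impI ballI)
    fix S T j assume SM: "S \<subseteq> M" and TS: "T \<subset> S" and j: "j \<in> M - S"
      and ind: "indiff pref T (insert j T)"
    have TM: "T \<subseteq> M" using SM TS by blast
    have rp: "\<And>X Y. X \<subseteq> M \<Longrightarrow> Y \<subseteq> M \<Longrightarrow> pref X Y \<longleftrightarrow> v X \<le> v Y"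
      using that(1) unfolding represents_def by blast
    have e1: "v (insert j T) = v T" using ind rp TM j unfolding indiff_def
      by (metis DiffD1 insert_subset order_antisym_conv)
    have sm: "v (insert j T) + v S \<ge> v (insert j T \<union> S) + v (insert j T \<inter> S)"
      using that(2) TM SM j unfolding submodular_on_def by blast
    have "insert j T \<union> S = insert j S" "insert j T \<inter> S = T" using TS j by auto
    hence "v (insert j S) \<le> v S" using sm e1 by simp
    moreover have "v S \<le> v (insert j S)" using rp mo SM j by (meson DiffD1 insert_subset subset_insertI)
    ultimately show "indiff pref S (insert j S)" using rp SM j unfolding indiff_def
      by (meson DiffD1 insert_subset order_refl)
  qed
  have D: "(\<exists>v. represents M v pref \<and> submodular_on M v) \<longleftrightarrow> satiation_only_at_top M pref"
  proof
    assume "\<exists>v. represents M v pref \<and> submodular_on M v"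
    then obtain v where "represents M v pref" "submodular_on M v" by blast
    thus "satiation_only_at_top M pref" by (rule C)
  qed (rule A)
  show ?thesis
  proof (intro conjI impI)
    show "\<exists>v. represents M v pref \<and> submodular_on M v" if "satiation_only_at_top M pref"
      using A that .
    show "\<exists>v. represents M v pref \<and> submodular_on M v" if "non_satiation M pref"
      using A B[OF that] .
  qed (rule D)
qed

end
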